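(* Let $p\in(0,1)$ and let $X$, $\gamma$ satisfy the standing assumptions in the context. Then $\inf\{\mathrm{VaR}_p(g(X)):g\in\mathcal G_{\rm cm}\}=-\infty$. Hence the problem of minimizing $\mathrm{VaR}_p(g(X))$ over $g\in\mathcal G_{\rm cm}$ admits no solution.
   Context: $(\Omega,\mathcal F,\mathbb P)$ is atomless. $\mathrm{VaR}_p(Y)=\inf\{x:\mathbb P(Y\le x)\ge p\}$. Standing assumptions: $X\ge0$ is a random variable whose distribution has a positive density on its support; $\gamma:\mathbb R\to\mathbb R$ is continuous and strictly positive with $\mathbb E[\gamma(X)]=1$ and $\mathbb E[\gamma(X)X]<\infty$. With $\mathcal G_1$ the measurable functions $\mathbb R\to\mathbb R$ and a budget $x_0\in\mathbb R$, $\mathcal G_{\rm cm}=\{g\in\mathcal G_1:\mathbb E[\gamma(X)g(X)]\ge x_0\}$. *)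

theory Defs
  imports "HOL-Probability.Probability"
begin

definition VaR :: "'a measure \<Rightarrow> real \<Rightarrow> ('a \<Rightarrow> real) \<Rightarrow> real" where
  "VaR M p Y = Inf {x. measure M {\<omega> \<in> space M. Y \<omega> \<le> x} \<ge> p}"

definition atomless :: "'a measure \<Rightarrow> bool" where
  "atomless M \<longleftrightarrow> (\<forall>A\<in>sets M. measure M A > 0 \<longrightarrow>
      (\<exists>B\<in>sets M. B \<subseteq> A \<and> 0 < measure M B \<and> measure M B < measure M A))"

definition dist_support :: "'a measure \<Rightarrow> ('a \<Rightarrow> real) \<Rightarrow> real set" where
  "dist_support M X = {x. \<forall>e>0. measure M {\<omega> \<in> space M. \<bar>X \<omega> - x\<bar> < e} > 0}"

definition G_cm :: "'a measure \<Rightarrow> ('a \<Rightarrow> real) \<Rightarrow> (real \<Rightarrow> real) \<Rightarrow> real \<Rightarrow> (real \<Rightarrow> real) set" where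
  "G_cm M X \<gamma> x0 = {g. g \<in> borel_measurable borel \<and>
      integrable M (\<lambda>\<omega>. \<gamma> (X \<omega>) * g (X \<omega>)) \<and>
      (\<integral>\<omega>. \<gamma> (X \<omega>) * g (X \<omega>) \<partial>M) \<ge> x0}"

end

theory Submission
  imports Defs
begin

lemma exists_quantile:
  fixes M :: "'a measure" and X :: "'a \<Rightarrow> real" and f :: "real \<Rightarrow> ennreal" and p :: real
  assumes P: "prob_space M" and Xm: "X \<in> borel_measurable M"
    and nn: "\<forall>\<omega>\<in>space M. X \<omega> \<ge> 0"
    and d: "distributed M lborel X f" and p: "0 < p" "p < 1"
  shows "\<exists>q. measure M {\<omega>\<in>space M. X \<omega> \<le> q} = p"
proof -
  interpret prob_space M by (rule P)
  define N where "N = distr M borel X"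
  interpret N: real_distribution N unfolding N_def using Xm by simp
  have cdfeq: "cdf N x = measure M {\<omega>\<in>space M. X \<omega> \<le> x}" for x
  proof -
    have "cdf N x = measure M (X -` {..x} \<inter> space M)"
      unfolding cdf_def N_def using Xm by (simp add: measure_distr)
    also have "X -` {..x} \<inter> space M = {\<omega>\<in>space M. X \<omega> \<le> x}" by auto
    finally show ?thesis .
  qed
  have pt: "measure N {x} = 0" for x
  proof -
    have "emeasure M (X -` {x} \<inter> space M) = (\<integral>\<^sup>+y. f y * indicator {x} y \<partial>lborel)"
      by (rule distributed_emeasure[OF d]) simp
    also have "\<dots> = (\<integral>\<^sup>+(y::real). 0 \<partial>lborel)"
    proof (rule nn_integral_cong_AE)
      show "AE y in lborel. f y * indicator {x} y = (0::ennreal)"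
        using AE_lborel_singleton[of x] by eventually_elim auto
    qed
    finally have "emeasure M (X -` {x} \<inter> space M) = 0" by simp
    then have "measure M (X -` {x} \<inter> space M) = 0" by (simp add: measure_def)
    then show ?thesis unfolding N_def using Xm by (simp add: measure_distr)
  qed
  have cont: "continuous_on UNIV (cdf N)"
    using N.isCont_cdf pt by (simp add: continuous_on_eq_continuous_at)
  have "cdf N (-1) = 0"
  proof -
    have "{\<omega>\<in>space M. X \<omega> \<le> -1} = {}" using nn by force
    then show ?thesis using cdfeq[of "-1"] by (metis measure_empty)
  qed
  moreover obtain b where b: "cdf N b > p"
  proof -
    have "eventually (\<lambda>x. cdf N x > p) at_top"
      using order_tendstoD(1)[OF N.cdf_lim_at_top_prob p(2)] .
    then obtain b where "\<And>x. x \<ge> b \<Longrightarrow> cdf N x > p" by (auto simp: eventually_at_top_linorder)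
    then show ?thesis using that by blast
  qed
  moreover have "-1 \<le> b"
  proof (rule ccontr)
    assume "\<not> -1 \<le> b"
    then have "cdf N b \<le> cdf N (-1)" by (intro N.cdf_nondecreasing) simp
    then show False using b p `cdf N (-1) = 0` by simp
  qed
  ultimately obtain q where "cdf N q = p"
    using IVT'[of "cdf N" "-1" p b] cont p by (auto intro: continuous_on_subset)
  then show ?thesis using cdfeq by auto
qed


theorem proposition3:
  fixes M :: "'a measure" and X :: "'a \<Rightarrow> real" and \<gamma> :: "real \<Rightarrow> real"
    and f :: "real \<Rightarrow> ennreal" and p x0 :: real
  assumes "prob_space M" and "atomless M"
    and "X \<in> borel_measurable M"
    and "\<forall>\<omega>\<in>space M. X \<omega> \<ge> 0"
    and "distributed M lborel X f"
    and "\<forall>x\<in>dist_support M X. f x > 0"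
    and "continuous_on UNIV \<gamma>" and "\<forall>x. \<gamma> x > 0"
    and "integrable M (\<lambda>\<omega>. \<gamma> (X \<omega>))" and "(\<integral>\<omega>. \<gamma> (X \<omega>) \<partial>M) = 1"
    and "integrable M (\<lambda>\<omega>. \<gamma> (X \<omega>) * X \<omega>)"
    and "0 < p" and "p < 1"
  shows "(\<forall>c::real. \<exists>g\<in>G_cm M X \<gamma> x0. VaR M p (\<lambda>\<omega>. g (X \<omega>)) < c)
         \<and> \<not> (\<exists>g\<in>G_cm M X \<gamma> x0. \<forall>h\<in>G_cm M X \<gamma> x0.
                 VaR M p (\<lambda>\<omega>. g (X \<omega>)) \<le> VaR M p (\<lambda>\<omega>. h (X \<omega>)))"
proof -
  interpret prob_space M by (rule assms(1))
  note Xm[measurable] = assms(3)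
  have gm[measurable]: "\<gamma> \<in> borel_measurable borel"
    using assms(7) by (rule borel_measurable_continuous_onI)
  obtain q where hq: "measure M {\<omega>\<in>space M. X \<omega> \<le> q} = p"
    using exists_quantile[OF assms(1,3,4,5,12,13)] by blast
  define h where "h \<omega> = \<gamma> (X \<omega>) * indicator {q<..} (X \<omega>)" for \<omega>
  have hm[measurable]: "h \<in> borel_measurable M" unfolding h_def by measurable
  have hint: "integrable M h"
  proof (rule Bochner_Integration.integrable_bound[OF assms(9)])
    show "h \<in> borel_measurable M" by (rule hm)
    show "AE \<omega> in M. norm (h \<omega>) \<le> norm (\<gamma> (X \<omega>))"
      unfolding h_def by (auto simp: indicator_def)
  qed
  have hnn: "\<And>\<omega>. 0 \<le> h \<omega>" unfolding h_def using assms(8)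
    by (simp add: less_imp_le)
  define I where "I = integral\<^sup>L M h"
  have Ipos: "I > 0"
  proof -
    have "I \<ge> 0" unfolding I_def using hnn by simp
    moreover have "I \<noteq> 0"
    proof
      assume "I = 0"
      then have "AE \<omega> in M. h \<omega> = 0"
        using integral_nonneg_eq_0_iff_AE[OF hint] hnn unfolding I_def by simp
      then have "AE \<omega> in M. \<omega> \<in> {\<omega>\<in>space M. X \<omega> \<le> q}"
        using AE_space
      proof eventually_elim
        case (elim \<omega>)
        then show ?case unfolding h_def using assms(8)[rule_format, of "X \<omega>"]
          by (auto simp: indicator_def split: if_splits)
      qed
      then have "prob {\<omega>\<in>space M. X \<omega> \<le> q} = 1"
        by (subst prob_eq_1) auto
      then show False using hq assms(13) by simp
    qed
    ultimately show ?thesis by simp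
  qed
  have part1: "\<exists>g\<in>G_cm M X \<gamma> x0. VaR M p (\<lambda>\<omega>. g (X \<omega>)) < c" for c :: real
  proof -
    define L where "L = c - 1"
    define D where "D = \<bar>x0 - L\<bar> / I"
    have D0: "D \<ge> 0" unfolding D_def using Ipos by simp
    define g where "g x = L + D * indicator {q<..} x" for x :: real
    have gge: "\<And>x. g x \<ge> L" unfolding g_def using D0 by simp
    have gmeas: "g \<in> borel_measurable borel" unfolding g_def by measurable
    have eq: "\<And>\<omega>. \<gamma> (X \<omega>) * g (X \<omega>) = L * \<gamma> (X \<omega>) + D * h \<omega>"
      unfolding g_def h_def by (simp add: algebra_simps)
    have int: "integrable M (\<lambda>\<omega>. \<gamma> (X \<omega>) * g (X \<omega>))"
      unfolding eq using assms(9) hint by simp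
    have "(\<integral>\<omega>. \<gamma> (X \<omega>) * g (X \<omega>) \<partial>M) = L * 1 + D * I"
      unfolding eq I_def using assms(9,10) hint by simp
    also have "\<dots> = L + \<bar>x0 - L\<bar>" unfolding D_def using Ipos by simp
    also have "\<dots> \<ge> x0" by simp
    finally have gG: "g \<in> G_cm M X \<gamma> x0"
      unfolding G_cm_def using gmeas int by simp
    define S where "S = {x. measure M {\<omega> \<in> space M. g (X \<omega>) \<le> x} \<ge> p}"
    have LS: "L \<in> S"
    proof -
      have "{\<omega>\<in>space M. X \<omega> \<le> q} \<subseteq> {\<omega> \<in> space M. g (X \<omega>) \<le> L}"
        unfolding g_def by auto
      moreover have "{\<omega> \<in> space M. g (X \<omega>) \<le> L} \<in> sets M"
      proof -
        have um: "(\<lambda>\<omega>. g (X \<omega>)) \<in> borel_measurable M" by (rule measurable_compose[OF Xm gmeas])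
        have "(\<lambda>\<omega>. g (X \<omega>)) -` {..L} \<inter> space M \<in> sets M" using um by (rule measurable_sets) simp
        moreover have "(\<lambda>\<omega>. g (X \<omega>)) -` {..L} \<inter> space M = {\<omega> \<in> space M. g (X \<omega>) \<le> L}" by auto
        ultimately show ?thesis by simp
      qed
      ultimately have "measure M {\<omega>\<in>space M. X \<omega> \<le> q} \<le> measure M {\<omega> \<in> space M. g (X \<omega>) \<le> L}"
        by (rule finite_measure_mono)
      then show ?thesis unfolding S_def using hq by simp
    qed
    have Slow: "L \<le> x" if "x \<in> S" for x
    proof (rule ccontr)
      assume "\<not> L \<le> x"
      then have gx: "g y > x" for y using gge[of y] by linarith
      have "{\<omega> \<in> space M. g (X \<omega>) \<le> x} = {}" using gx by (auto simp: not_le)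
      then have m0: "measure M {\<omega> \<in> space M. g (X \<omega>) \<le> x} = 0" by (metis measure_empty)
      have "p \<le> measure M {\<omega> \<in> space M. g (X \<omega>) \<le> x}" using that unfolding S_def by simp
      then show False using m0 assms(12) by linarith
    qed
    have "VaR M p (\<lambda>\<omega>. g (X \<omega>)) = L"
      unfolding VaR_def S_def[symmetric] using LS Slow by (rule cInf_eq_minimum)
    then show ?thesis using gG unfolding L_def by (intro bexI[of _ g]) auto
  qed
  show ?thesis
  proof
    show "\<forall>c. \<exists>g\<in>G_cm M X \<gamma> x0. VaR M p (\<lambda>\<omega>. g (X \<omega>)) < c" using part1 by blast
    show "\<not> (\<exists>g\<in>G_cm M X \<gamma> x0. \<forall>h\<in>G_cm M X \<gamma> x0.
                 VaR M p (\<lambda>\<omega>. g (X \<omega>)) \<le> VaR M p (\<lambda>\<omega>. h (X \<omega>)))"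
    proof
      assume "\<exists>g\<in>G_cm M X \<gamma> x0. \<forall>h\<in>G_cm M X \<gamma> x0.
                 VaR M p (\<lambda>\<omega>. g (X \<omega>)) \<le> VaR M p (\<lambda>\<omega>. h (X \<omega>))"
      then obtain g where A: "\<forall>h\<in>G_cm M X \<gamma> x0.
                 VaR M p (\<lambda>\<omega>. g (X \<omega>)) \<le> VaR M p (\<lambda>\<omega>. h (X \<omega>))" by blast
      obtain h where B: "h \<in> G_cm M X \<gamma> x0" "VaR M p (\<lambda>\<omega>. h (X \<omega>)) < VaR M p (\<lambda>\<omega>. g (X \<omega>))"
        using part1 by blast
      from A B(1) have "VaR M p (\<lambda>\<omega>. g (X \<omega>)) \<le> VaR M p (\<lambda>\<omega>. h (X \<omega>))" by blast
      then show False using B(2) by linarith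
    qed
  qed
qed

end
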